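(* Let $S$ be a one-dimensional tiling substitution with expansion constant $\beta>1$ and with $\vec h\in(r\mathbb{Q}(\beta))^m$ for some $r>0$, and suppose $\beta$ is a Pisot number. Let $T$ be a central tile whose endpoints belong to $\mathbb{Q}(\beta)$. Then there exist $K,L\in\mathbb N$ such that $\bar S^{NL+K}(T)=\bar S^{K}(T)$ for all $N>0$.
   Context: A Pisot number is an algebraic integer $\beta>1$ all of whose Galois conjugates $\beta'\ne\beta$ satisfy $|\beta'|<1$. A one-dimensional tiling substitution is built as follows: $\sigma:\mathcal A\to\mathcal A^*$ is a substitution on $\mathcal A=\{1,\dots,m\}$ (with $\mathcal A^*$ the nonempty finite words), its structure matrix $M$ ($M_{i,j}$ = number of occurrences of $j$ in $\sigma(i)$) has real eigenvalue $\beta>1$ with right eigenvector $\vec h=(h_1,\dots,h_m)$ having strictly positive entries. Prototiles are $P_j=[0,h_j)$ with label $j$; a tile is a labeled translate $P_j+s=[s,s+h_j)$. For a word $\mathbf w=j_1\cdots j_n$, $\pi(s,\mathbf w)=(P_{j_1}+s_1,\dots,P_{j_n}+s_n)$ with $s_1=s$, $s_{i+1}=s_i+h_{j_i}$; the substitution is $S(P_j+s)=\pi(\beta s,\sigma(j))$. A central tile is a tile $[s,t)$ with $s\le0<t$, and $\bar S(T)$ is the unique tile of $S(T)$ containing $0$. Equality of tiles means equal intervals with equal labels. *)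

theory Defs
  imports Complex_Main "HOL-Computational_Algebra.Polynomial" "HOL-Computational_Algebra.Factorial_Ring"
begin

definition struct_matrix :: "('a \<Rightarrow> 'a list) \<Rightarrow> 'a \<Rightarrow> 'a \<Rightarrow> nat" where
  "struct_matrix \<sigma> i j = count_list (\<sigma> i) j"

text \<open>A tile P_j + s = [s, s + h_j) with label j is represented by the pair (s, j).\<close>
type_synonym 'a tile = "real \<times> 'a"

definition tile_interval :: "('a \<Rightarrow> real) \<Rightarrow> 'a tile \<Rightarrow> real set" where
  "tile_interval h T = {fst T ..< fst T + h (snd T)}"

fun tile_pi :: "('a \<Rightarrow> real) \<Rightarrow> real \<Rightarrow> 'a list \<Rightarrow> 'a tile list" where
  "tile_pi h s [] = []"
| "tile_pi h s (j # w) = (s, j) # tile_pi h (s + h j) w"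

definition tile_subst :: "('a \<Rightarrow> real) \<Rightarrow> real \<Rightarrow> ('a \<Rightarrow> 'a list) \<Rightarrow> 'a tile \<Rightarrow> 'a tile list" where
  "tile_subst h \<beta> \<sigma> T = tile_pi h (\<beta> * fst T) (\<sigma> (snd T))"

definition central_tile :: "('a \<Rightarrow> real) \<Rightarrow> 'a tile \<Rightarrow> bool" where
  "central_tile h T \<longleftrightarrow> fst T \<le> 0 \<and> 0 < fst T + h (snd T)"

definition Sbar :: "('a \<Rightarrow> real) \<Rightarrow> real \<Rightarrow> ('a \<Rightarrow> 'a list) \<Rightarrow> 'a tile \<Rightarrow> 'a tile" where
  "Sbar h \<beta> \<sigma> T = (THE T'. T' \<in> set (tile_subst h \<beta> \<sigma> T) \<and> 0 \<in> tile_interval h T')"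

text \<open>The field Q(beta) (beta is algebraic in our application).\<close>
definition Qfield :: "real \<Rightarrow> real set" where
  "Qfield \<beta> = {x. \<exists>p :: rat poly. x = poly (map_poly of_rat p) \<beta>}"

definition pisot :: "real \<Rightarrow> bool" where
  "pisot \<beta> \<longleftrightarrow> \<beta> > 1 \<and> (\<exists>p :: int poly. lead_coeff p = 1 \<and> irreducible p \<and>
      poly (map_poly of_int p) \<beta> = 0 \<and>
      (\<forall>z :: complex. poly (map_poly of_int p) z = 0 \<and> z \<noteq> complex_of_real \<beta> \<longrightarrow> cmod z < 1))"

end

theory Submission
  imports Defs "Berlekamp_Zassenhaus.Factorize_Int_Poly" "Berlekamp_Zassenhaus.Square_Free_Int_To_Square_Free_GFp"
begin
interpretation of_rat_c: field_hom_0' "of_rat :: rat \<Rightarrow> complex" by standard auto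
interpretation mpr: map_poly_idom_hom "of_rat :: rat \<Rightarrow> 'a::field_char_0" by unfold_locales

lemma pisot_roots_card:
  assumes "lead_coeff (p::int poly) = 1" "irreducible p"
  shows "card {z::complex. poly (of_int_poly p) z = 0} = degree p"
proof -
  have "square_free p" using assms(2) by (rule irreducible_imp_square_free)
  hence "square_free (map_poly rat_of_int p)" by (rule square_free_int_rat)
  hence "square_free (map_poly (of_rat :: rat \<Rightarrow> complex) (map_poly rat_of_int p))"
    by (simp add: of_rat_c.square_free_map_poly)
  hence sf: "square_free (of_int_poly p :: complex poly)" by (simp add: map_poly_map_poly o_def)
  have "p \<noteq> 0" using assms(1) by auto
  hence nz: "(of_int_poly p :: complex poly) \<noteq> 0" by simp
  have "rsquarefree (of_int_poly p :: complex poly)" using sf by (rule square_free_rsquarefree)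
  with rsquarefree_card_degree[OF nz] show ?thesis by simp
qed

lemma lagrange_bound:
  fixes Z :: "complex set"
  assumes fin: "finite Z" and cardZ: "card Z = N"
  shows "\<exists>C\<ge>0. \<forall>W B. degree W < N \<longrightarrow> (\<forall>z\<in>Z. cmod (poly W z) \<le> B) \<longrightarrow> (\<forall>k. cmod (coeff W k) \<le> C * B)"
proof -
  define L where "L z = Polynomial.smult (inverse (\<Prod>w\<in>Z-{z}. z - w)) (\<Prod>w\<in>Z-{z}. [:-w,1:])" for z
  have polyL: "poly (L z) y = (if y = z then 1 else 0)" if "z \<in> Z" "y \<in> Z" for z y
  proof (cases "y = z")
    case True
    have "(\<Prod>w\<in>Z-{z}. z - w) \<noteq> 0" using fin by (subst prod_zero_iff) auto
    then show ?thesis using True by (simp add: L_def poly_prod)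
  next
    case False
    have "(\<Prod>w\<in>Z-{z}. y - w) = 0" using fin False that by (subst prod_zero_iff) auto
    then show ?thesis using False by (simp add: L_def poly_prod)
  qed
  have degL: "degree (L z) \<le> N - 1" if "z \<in> Z" for z
  proof -
    have "degree (L z) \<le> degree (\<Prod>w\<in>Z-{z}. [:-w,1:])" unfolding L_def by (rule degree_smult_le)
    also have "\<dots> \<le> (\<Sum>w\<in>Z-{z}. degree [:-w,1:])" using degree_prod_sum_le[of "Z-{z}" "\<lambda>w. [:-w,1:]"] fin by (simp add: o_def)
    also have "\<dots> = card (Z - {z})" by simp
    also have "\<dots> = N - 1" using fin that cardZ by simp
    finally show ?thesis .
  qed
  define C where "C = (\<Sum>z\<in>Z. \<Sum>i<N. cmod (coeff (L z) i))"
  have C0: "C \<ge> 0" unfolding C_def by (intro sum_nonneg) auto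
  have main: "cmod (coeff W k) \<le> C * B" if dW: "degree W < N" and bd: "\<forall>z\<in>Z. cmod (poly W z) \<le> B" for W B k
  proof -
    have "N > 0" using dW by simp
    hence "Z \<noteq> {}" using cardZ by auto
    then obtain z0 where "z0 \<in> Z" by auto
    hence B0: "B \<ge> 0" using bd norm_ge_zero order_trans by blast
    define W' where "W' = (\<Sum>z\<in>Z. Polynomial.smult (poly W z) (L z))"
    have "W = W'"
    proof (rule ccontr)
      assume ne: "W \<noteq> W'"
      define D where "D = W - W'"
      have D0: "D \<noteq> 0" using ne by (simp add: D_def)
      have "degree W' \<le> N - 1" unfolding W'_def
        using fin degL by (intro degree_sum_le) (auto intro: order_trans[OF degree_smult_le] simp del: One_nat_def)
      hence dD: "degree D < N" using dW \<open>N > 0\<close> unfolding D_def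
        using degree_diff_le_max[of W W'] by linarith
      have rootD: "poly D y = 0" if "y \<in> Z" for y
      proof -
        have "poly W' y = (\<Sum>z\<in>Z. poly W z * (if y = z then 1 else 0))"
          unfolding W'_def poly_sum poly_smult using polyL that by (intro sum.cong) auto
        also have "\<dots> = (\<Sum>z\<in>Z. if y = z then poly W z else 0)" by (intro sum.cong) auto
        also have "\<dots> = poly W y" using fin that by (simp add: sum.delta)
        finally show ?thesis by (simp add: D_def)
      qed
      have "Z \<subseteq> {x. poly D x = 0}" using rootD by auto
      hence "card Z \<le> card {x. poly D x = 0}" using poly_roots_finite[OF D0] by (rule card_mono[rotated])
      also have "\<dots> \<le> degree D" by (rule card_poly_roots_bound[OF D0])
      finally show False using dD cardZ by simp
    qed
    show ?thesis
    proof (cases "k < N")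
      case False
      hence "coeff W k = 0" using dW by (intro coeff_eq_0) simp
      thus ?thesis using C0 B0 by simp
    next
      case True
      have "coeff W k = (\<Sum>z\<in>Z. poly W z * coeff (L z) k)"
        by (subst \<open>W = W'\<close>) (simp add: W'_def coeff_sum)
      hence "cmod (coeff W k) \<le> (\<Sum>z\<in>Z. cmod (poly W z * coeff (L z) k))"
        by (simp add: norm_sum)
      also have "\<dots> \<le> (\<Sum>z\<in>Z. B * cmod (coeff (L z) k))"
        by (intro sum_mono) (simp add: norm_mult bd mult_right_mono)
      also have "\<dots> = B * (\<Sum>z\<in>Z. cmod (coeff (L z) k))" by (simp add: sum_distrib_left)
      also have "\<dots> \<le> B * C" unfolding C_def
        by (intro mult_left_mono B0 sum_mono member_le_sum) (use True in auto)
      finally show ?thesis by (simp add: mult.commute)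
    qed
  qed
  show ?thesis using C0 main by blast
qed

lemma finite_bounded_polys:
  fixes d :: nat and c :: real
  assumes d0: "d > 0"
  shows "finite {V::rat poly. degree V < N \<and> (\<forall>i. of_nat d * coeff V i \<in> \<int>) \<and> (\<forall>i. \<bar>real_of_rat (coeff V i)\<bar> \<le> c)}"
    (is "finite ?S")
proof -
  define A where "A = {q::rat. of_nat d * q \<in> \<int> \<and> \<bar>real_of_rat q\<bar> \<le> c}"
  define K where "K = \<lceil>real d * c\<rceil>"
  have "A \<subseteq> (\<lambda>k. of_int k / of_nat d) ` {-K..K}"
  proof
    fix q assume "q \<in> A"
    then obtain k where k: "of_nat d * q = of_int k" and qc: "\<bar>real_of_rat q\<bar> \<le> c"
      unfolding A_def by (auto elim: Ints_cases)
    have q: "q = of_int k / of_nat d" using k d0 by (simp add: field_simps)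
    have "real_of_rat (of_int k) = real d * real_of_rat q" using k
      by (metis of_rat_mult of_rat_of_nat_eq)
    hence "\<bar>real_of_int k\<bar> = real d * \<bar>real_of_rat q\<bar>" by (simp add: abs_mult)
    also have "\<dots> \<le> real d * c" using qc by (simp add: mult_left_mono)
    finally have "\<bar>real_of_int k\<bar> \<le> real d * c" .
    hence "k \<in> {-K..K}" unfolding K_def by (auto simp: abs_le_iff) linarith+
    thus "q \<in> (\<lambda>k. of_int k / of_nat d) ` {-K..K}" using q by blast
  qed
  hence finA: "finite A" by (rule finite_subset) simp
  define f where "f V = map (coeff V) [0..<N]" for V :: "rat poly"
  have inj: "inj_on f ?S"
  proof (rule inj_onI)
    fix V W assume V: "V \<in> ?S" and W: "W \<in> ?S" and eq: "f V = f W"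
    show "V = W"
    proof (rule poly_eqI)
      fix i show "coeff V i = coeff W i"
      proof (cases "i < N")
        case True
        have "f V ! i = f W ! i" using eq by simp
        thus ?thesis using True by (simp add: f_def)
      next
        case False
        thus ?thesis using V W by (simp add: coeff_eq_0)
      qed
    qed
  qed
  have "f ` ?S \<subseteq> {xs. set xs \<subseteq> A \<and> length xs = N}"
    by (auto simp: f_def A_def)
  hence "finite (f ` ?S)" using finite_lists_length_eq[OF finA] by (rule finite_subset)
  thus ?thesis using inj by (rule finite_imageD)
qed

lemma common_denominator:
  fixes S :: "rat poly set"
  assumes "finite S"
  shows "\<exists>d::nat. d > 0 \<and> (\<forall>V\<in>S. \<forall>i. of_nat d * coeff V i \<in> \<int>)"
proof -
  have one: "\<exists>d::nat. d > 0 \<and> (\<forall>q\<in>Q. of_nat d * q \<in> \<int>)" if "finite Q" for Q :: "rat set"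
    using that
  proof (induction Q rule: finite_induct)
    case empty then show ?case by (intro exI[of _ 1]) auto
  next
    case (insert q Q)
    then obtain d where d: "d > 0" "\<forall>q\<in>Q. of_nat d * q \<in> \<int>" by auto
    obtain a b where ab: "quotient_of q = (a, b)" by force
    have b0: "b > 0" using quotient_of_denom_pos[OF ab] .
    have qab: "q = of_int a / of_int b" using quotient_of_div[OF ab] .
    have "of_nat (nat b) * q = of_int a" using b0 qab by simp
    hence c1: "of_nat (nat b) * q \<in> \<int>" by simp
    show ?case
    proof (intro exI[of _ "d * nat b"] conjI ballI)
      show "d * nat b > 0" using d b0 by simp
      fix x assume "x \<in> insert q Q"
      then show "of_nat (d * nat b) * x \<in> \<int>"
      proof
        assume "x = q"
        then have e: "of_nat (d * nat b) * x = of_nat d * (of_nat (nat b) * q)" by simp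
        show ?thesis unfolding e by (rule Ints_mult) (use c1 in auto)
      next
        assume "x \<in> Q"
        have e: "of_nat (d * nat b) * x = of_nat (nat b) * (of_nat d * x)" by simp
        show ?thesis unfolding e by (rule Ints_mult) (use d \<open>x \<in> Q\<close> in auto)
      qed
    qed
  qed
  define Q where "Q = (\<Union>V\<in>S. coeff V ` {..degree V})"
  have "finite Q" unfolding Q_def using assms by auto
  from one[OF this] obtain d where d: "d > 0" "\<forall>q\<in>Q. of_nat d * q \<in> \<int>" by auto
  show ?thesis
  proof (intro exI[of _ d] conjI ballI allI)
    fix V i assume "V \<in> S"
    show "of_nat d * coeff V i \<in> \<int>"
    proof (cases "i \<le> degree V")
      case True
      thus ?thesis using d \<open>V \<in> S\<close> unfolding Q_def by auto
    next
      case False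
      thus ?thesis by (simp add: coeff_eq_0)
    qed
  qed (use d in auto)
qed

lemma set_tile_pi:
  "set (tile_pi h s w) = {(s + sum_list (map h (take k w)), w ! k) | k. k < length w}"
proof (induction w arbitrary: s)
  case Nil then show ?case by simp
next
  case (Cons j w)
  have "set (tile_pi h s (j # w)) = insert (s, j) {(s + h j + sum_list (map h (take k w)), w ! k) | k. k < length w}"
    by (simp add: Cons.IH)
  also have "\<dots> = {(s + sum_list (map h (take k (j # w))), (j # w) ! k) | k. k < length (j # w)}"
  proof (intro equalityI subsetI)
    fix x assume "x \<in> insert (s, j) {(s + h j + sum_list (map h (take k w)), w ! k) | k. k < length w}"
    then show "x \<in> {(s + sum_list (map h (take k (j # w))), (j # w) ! k) | k. k < length (j # w)}"
    proof
      assume "x = (s, j)" then show ?thesis by (intro CollectI exI[of _ 0]) auto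
    next
      assume "x \<in> {(s + h j + sum_list (map h (take k w)), w ! k) | k. k < length w}"
      then obtain k where "k < length w" "x = (s + h j + sum_list (map h (take k w)), w ! k)" by blast
      then show ?thesis by (intro CollectI exI[of _ "Suc k"]) (auto simp: algebra_simps)
    qed
  next
    fix x assume "x \<in> {(s + sum_list (map h (take k (j # w))), (j # w) ! k) | k. k < length (j # w)}"
    then obtain k where k: "k < length (j # w)" "x = (s + sum_list (map h (take k (j # w))), (j # w) ! k)" by blast
    show "x \<in> insert (s, j) {(s + h j + sum_list (map h (take k w)), w ! k) | k. k < length w}"
    proof (cases k)
      case 0 then show ?thesis using k by simp
    next
      case (Suc k') then show ?thesis using k by (auto simp: algebra_simps)
    qed
  qed
  finally show ?case .
qed

lemma sum_list_count:
  fixes f :: "'a::finite \<Rightarrow> real"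
  shows "sum_list (map f xs) = (\<Sum>y\<in>UNIV. real (count_list xs y) * f y)"
proof (induction xs)
  case Nil then show ?case by simp
next
  case (Cons x xs)
  have "(\<Sum>y\<in>UNIV. real (count_list (x # xs) y) * f y) = (\<Sum>y\<in>UNIV. (if x = y then f y else 0) + real (count_list xs y) * f y)"
    by (intro sum.cong) (auto simp: algebra_simps)
  also have "\<dots> = f x + (\<Sum>y\<in>UNIV. real (count_list xs y) * f y)"
    by (simp add: sum.distrib)
  finally show ?case using Cons by simp
qed

lemma Sbar_step:
  fixes h :: "'a \<Rightarrow> real"
  assumes hpos: "\<forall>j. h j > 0" and bpos: "\<beta> > 0"
    and lsum: "sum_list (map h (\<sigma> j)) = \<beta> * h j"
    and cen: "s \<le> 0" "0 < s + h j"
  shows "\<exists>k < length (\<sigma> j). Sbar h \<beta> \<sigma> (s, j) = (\<beta> * s + sum_list (map h (take k (\<sigma> j))), \<sigma> j ! k)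
     \<and> \<beta> * s + sum_list (map h (take k (\<sigma> j))) \<le> 0
     \<and> 0 < \<beta> * s + sum_list (map h (take k (\<sigma> j))) + h (\<sigma> j ! k)"
proof -
  define w where "w = \<sigma> j"
  define P where "P k = sum_list (map h (take k w))" for k
  define L where "L = length w"
  have Psuc: "P (Suc k) = P k + h (w ! k)" if "k < L" for k
    using that by (simp add: P_def L_def take_Suc_conv_app_nth)
  have Pstep: "P k \<le> P (Suc k)" for k
  proof (cases "k < L")
    case True then show ?thesis using Psuc hpos by (simp add: less_imp_le)
  next
    case False then show ?thesis by (simp add: P_def L_def)
  qed
  have Pmono: "k \<le> k' \<Longrightarrow> P k \<le> P k'" for k k'
    by (rule lift_Suc_mono_le[of P, OF Pstep])
  have PL: "P L = \<beta> * h j" by (simp add: P_def L_def w_def lsum)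
  have L0: "L > 0"
  proof (rule ccontr)
    assume "\<not> L > 0" then have "P L = 0" by (simp add: P_def L_def)
    with PL bpos hpos show False by (metis mult_pos_pos less_irrefl)
  qed
  define K where "K = {k. k < L \<and> \<beta> * s + P k \<le> 0}"
  have finK: "finite K" by (simp add: K_def)
  have "0 \<in> K" using L0 cen bpos by (simp add: K_def P_def mult_nonneg_nonpos)
  hence KNE: "K \<noteq> {}" by auto
  define k0 where "k0 = Max K"
  have k0K: "k0 \<in> K" using finK KNE by (simp add: k0_def)
  hence k0L: "k0 < L" and k0le: "\<beta> * s + P k0 \<le> 0" by (auto simp: K_def)
  have k0max: "k \<le> k0" if "k \<in> K" for k using finK that by (simp add: k0_def)
  have k0gt: "0 < \<beta> * s + P (Suc k0)"
  proof (cases "Suc k0 < L")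
    case True
    have "Suc k0 \<notin> K" using k0max by fastforce
    then show ?thesis using True by (auto simp: K_def)
  next
    case False
    hence "Suc k0 = L" using k0L by simp
    hence "\<beta> * s + P (Suc k0) = \<beta> * (s + h j)" using PL by (simp add: algebra_simps)
    then show ?thesis using bpos cen by simp
  qed
  define T0 where "T0 = (\<beta> * s + P k0, w ! k0)"
  have setS: "set (tile_subst h \<beta> \<sigma> (s, j)) = {(\<beta> * s + P k, w ! k) | k. k < L}"
    by (simp add: tile_subst_def set_tile_pi P_def L_def w_def)
  have T0in: "T0 \<in> set (tile_subst h \<beta> \<sigma> (s, j)) \<and> 0 \<in> tile_interval h T0"
    using k0L k0le k0gt Psuc[OF k0L] unfolding setS T0_def tile_interval_def by (auto simp: algebra_simps)
  have uniq: "T' = T0" if "T' \<in> set (tile_subst h \<beta> \<sigma> (s, j)) \<and> 0 \<in> tile_interval h T'" for T'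
  proof -
    from that obtain k where k: "k < L" "T' = (\<beta> * s + P k, w ! k)" and int: "0 \<in> tile_interval h T'"
      unfolding setS by blast
    have le: "\<beta> * s + P k \<le> 0" and gt: "0 < \<beta> * s + P (Suc k)"
      using int k Psuc[OF k(1)] by (auto simp: tile_interval_def algebra_simps)
    have "k \<in> K" using le k by (simp add: K_def)
    hence "k \<le> k0" by (rule k0max)
    moreover have "\<not> k < k0"
    proof
      assume "k < k0"
      hence "P (Suc k) \<le> P k0" by (intro Pmono) simp
      with gt k0le show False by simp
    qed
    ultimately have "k = k0" by simp
    thus ?thesis using k by (simp add: T0_def)
  qed
  have "Sbar h \<beta> \<sigma> (s, j) = T0"
    unfolding Sbar_def by (rule the1_equality) (use T0in uniq in blast)+
  thus ?thesis using k0L k0le k0gt Psuc[OF k0L]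
    by (intro exI[of _ k0]) (auto simp: T0_def P_def w_def L_def algebra_simps)
qed

lemma eventually_periodic:
  fixes F :: "'b \<Rightarrow> 'b"
  assumes fin: "finite (range (\<lambda>n. (F ^^ n) x))"
  shows "\<exists>K L :: nat. L > 0 \<and> (\<forall>N::nat. N > 0 \<longrightarrow> (F ^^ (N * L + K)) x = (F ^^ K) x)"
proof -
  have "\<not> inj (\<lambda>n. (F ^^ n) x)"
  proof
    assume "inj (\<lambda>n. (F ^^ n) x)"
    hence "finite (UNIV :: nat set)" using fin finite_imageD by blast
    thus False by simp
  qed
  then obtain a b where ab: "a \<noteq> b" "(F ^^ a) x = (F ^^ b) x" unfolding inj_def by blast
  obtain a' b' where ab': "a' < b'" "(F ^^ a') x = (F ^^ b') x"
  proof (cases "a < b")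
    case True then show ?thesis using ab that by blast
  next
    case False then show ?thesis using ab that[of b a] by simp
  qed
  define L where "L = b' - a'"
  have per: "(F ^^ (m * L + a')) x = (F ^^ a') x" for m
  proof (induction m)
    case 0 then show ?case by simp
  next
    case (Suc m)
    have "Suc m * L + a' = m * L + b'" using ab' by (simp add: L_def)
    hence "(F ^^ (Suc m * L + a')) x = (F ^^ (m * L)) ((F ^^ b') x)" by (simp only: funpow_add o_apply)
    also have "\<dots> = (F ^^ (m * L)) ((F ^^ a') x)" using ab' by simp
    also have "\<dots> = (F ^^ (m * L + a')) x" by (simp only: funpow_add o_apply)
    finally show ?case using Suc by simp
  qed
  show ?thesis using per ab' by (intro exI[of _ a'] exI[of _ L]) (auto simp: L_def)
qed

lemma ev_mod:
  fixes x :: "'b::field_char_0"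
  assumes "poly (map_poly of_rat q) x = 0"
  shows "poly (map_poly of_rat (f mod q)) x = poly (map_poly of_rat f) x"
proof -
  have "poly (map_poly of_rat f) x = poly (map_poly of_rat (f div q * q + f mod q)) x" by simp
  also have "\<dots> = poly (map_poly of_rat (f div q)) x * poly (map_poly of_rat q) x + poly (map_poly of_rat (f mod q)) x"
    by (simp only: mpr.hom_add mpr.hom_mult poly_add poly_mult)
  also have "\<dots> = poly (map_poly of_rat (f mod q)) x" using assms by simp
  finally show ?thesis by simp
qed

lemma ev_step:
  fixes x :: "'b::field_char_0"
  shows "poly (map_poly of_rat (pCons 0 W + e - Polynomial.smult c q)) x
     = x * poly (map_poly of_rat W) x + poly (map_poly of_rat e) x - of_rat c * poly (map_poly of_rat q) x"
  by (simp add: hom_distribs map_poly_pCons)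

lemma ev_real_complex:
  "poly (map_poly (of_rat::rat\<Rightarrow>complex) V) (complex_of_real x) = complex_of_real (poly (map_poly of_rat V) x)"
  by (simp add: map_poly_map_poly o_def of_real_hom.poly_map_poly[symmetric])

lemma cmod_of_rat: "cmod (of_rat q) = \<bar>real_of_rat q\<bar>"
proof -
  have e: "(of_rat q :: complex) = complex_of_real (of_rat q)"
  proof -
    obtain a b where ab: "quotient_of q = (a, b)" by force
    have "q = of_int a / of_int b" using quotient_of_div[OF ab] .
    thus ?thesis by (simp add: of_rat_divide)
  qed
  show ?thesis by (subst e) (rule norm_of_real)
qed

lemma deg_map_rat: "degree (map_poly (of_rat :: rat \<Rightarrow> complex) V) = degree V"
  by simp

lemma coeff_map_rat: "coeff (map_poly (of_rat :: rat \<Rightarrow> complex) V) k = of_rat (coeff V k)"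
  by (simp add: coeff_map_poly)

theorem mainTheorem3:
  fixes \<sigma> :: "'a::finite \<Rightarrow> 'a list" and h :: "'a \<Rightarrow> real"
    and \<beta> r :: real and T :: "'a tile"
  assumes nonempty: "\<forall>j. \<sigma> j \<noteq> []"
    and beta_gt1: "\<beta> > 1"
    and h_pos: "\<forall>j. h j > 0"
    and eigen: "\<forall>i. (\<Sum>j\<in>UNIV. real (struct_matrix \<sigma> i j) * h j) = \<beta> * h i"
    and r_pos: "r > 0"
    and h_in: "\<forall>j. \<exists>q \<in> Qfield \<beta>. h j = r * q"
    and pis: "pisot \<beta>"
    and central: "central_tile h T"
    and left_end: "fst T \<in> Qfield \<beta>"
    and right_end: "fst T + h (snd T) \<in> Qfield \<beta>"
  shows "\<exists>K L :: nat. L > 0 \<and>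
           (\<forall>N::nat. N > 0 \<longrightarrow> (Sbar h \<beta> \<sigma> ^^ (N * L + K)) T = (Sbar h \<beta> \<sigma> ^^ K) T)"
proof -
  define F where "F = Sbar h \<beta> \<sigma>"
  define Tn where "Tn n = (F ^^ n) T" for n
  define s where "s n = fst (Tn n)" for n
  define jn where "jn n = snd (Tn n)" for n
  define P where "P j k = sum_list (map h (take k (\<sigma> j)))" for j k
  have bpos: "\<beta> > 0" using beta_gt1 by simp
  have lsum: "sum_list (map h (\<sigma> j)) = \<beta> * h j" for j
    using eigen sum_list_count[of h "\<sigma> j"] by (simp add: struct_matrix_def)
  have TnS: "Tn (Suc n) = F (Tn n)" for n by (simp add: Tn_def)
  have Tn_eq: "Tn n = (s n, jn n)" for n by (simp add: s_def jn_def)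
  have cen_all: "s n \<le> 0 \<and> 0 < s n + h (jn n)" for n
  proof (induction n)
    case 0 then show ?case using central by (simp add: s_def jn_def Tn_def central_tile_def)
  next
    case (Suc n)
    obtain k where "k < length (\<sigma> (jn n))"
      "Sbar h \<beta> \<sigma> (s n, jn n) = (\<beta> * s n + P (jn n) k, \<sigma> (jn n) ! k)"
      "\<beta> * s n + P (jn n) k \<le> 0" "0 < \<beta> * s n + P (jn n) k + h (\<sigma> (jn n) ! k)"
      using Sbar_step[where s="s n" and j="jn n" and \<sigma>=\<sigma>, OF h_pos bpos lsum[of "jn n"] Suc[THEN conjunct1] Suc[THEN conjunct2]] unfolding P_def by blast
    then show ?case using TnS[of n] Tn_eq[of n] Tn_eq[of "Suc n"] by (simp add: F_def)
  qed
  have step: "\<exists>k < length (\<sigma> (jn n)). s (Suc n) = \<beta> * s n + P (jn n) k" for n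
  proof -
    obtain k where "k < length (\<sigma> (jn n))"
      "Sbar h \<beta> \<sigma> (s n, jn n) = (\<beta> * s n + P (jn n) k, \<sigma> (jn n) ! k)"
      using Sbar_step[where s="s n" and j="jn n" and \<sigma>=\<sigma>, OF h_pos bpos lsum[of "jn n"] cen_all[of n, THEN conjunct1] cen_all[of n, THEN conjunct2]]
      unfolding P_def by blast
    then show ?thesis using TnS[of n] Tn_eq[of n] Tn_eq[of "Suc n"] by (auto simp: F_def)
  qed

  from pis obtain p :: "int poly" where lc: "lead_coeff p = 1" and irr: "irreducible p"
    and proot: "poly (of_int_poly p) \<beta> = 0"
    and conj: "\<forall>z::complex. poly (of_int_poly p) z = 0 \<and> z \<noteq> complex_of_real \<beta> \<longrightarrow> cmod z < 1"
    unfolding pisot_def by blast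
  define N where "N = degree p"
  define Z where "Z = {z::complex. poly (of_int_poly p) z = 0}"
  have p0: "p \<noteq> 0" using lc by auto
  have finZ: "finite Z" unfolding Z_def by (rule poly_roots_finite) (simp add: p0)
  have cardZ: "card Z = N" unfolding Z_def N_def by (rule pisot_roots_card[OF lc irr])
  have N0: "N > 0"
  proof (rule ccontr)
    assume "\<not> N > 0"
    hence d0: "degree p = 0" by (simp add: N_def)
    hence "coeff p 0 = 1" using lc by simp
    hence "p = [:1:]" using degree_0_id[OF d0] by simp
    thus False using proot by simp
  qed
  define pQ where "pQ = (of_int_poly p :: rat poly)"
  have pQ0: "pQ \<noteq> 0" using p0 by (simp add: pQ_def)
  have degpQ: "degree pQ = N" by (simp add: pQ_def N_def)
  have coeffpQN: "coeff pQ N = 1" using lc by (simp add: pQ_def N_def coeff_map_poly)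
  have pQint: "coeff pQ i \<in> \<int>" for i by (simp add: pQ_def coeff_map_poly)
  have pQhigh: "coeff pQ i = 0" if "i > N" for i using that degpQ by (simp add: coeff_eq_0)
  have evpQR: "poly (map_poly (of_rat::rat\<Rightarrow>real) pQ) \<beta> = 0"
    using proot by (simp add: pQ_def map_poly_map_poly o_def)
  have evpQC: "poly (map_poly (of_rat::rat\<Rightarrow>complex) pQ) z = 0" if "z \<in> Z" for z
    using that by (simp add: pQ_def Z_def map_poly_map_poly o_def)
  have degmod: "degree (f mod pQ) < N" for f
    using degree_mod_less[OF pQ0, of f] degpQ N0 by auto

  define evR where "evR V = poly (map_poly (of_rat::rat\<Rightarrow>real) V) \<beta>" for V
  define evC where "evC V z = poly (map_poly (of_rat::rat\<Rightarrow>complex) V) z" for V z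

  have "\<forall>j. \<exists>Q::rat poly. h j = r * evR Q" using h_in unfolding Qfield_def evR_def by blast
  from choice[OF this] obtain Pj where Pj: "\<And>j. h j = r * evR (Pj j)" by blast
  obtain Lp where Lp: "fst T = evR Lp" using left_end unfolding Qfield_def evR_def by blast
  obtain Rp where Rp: "fst T + h (snd T) = evR Rp" using right_end unfolding Qfield_def evR_def by blast
  define j0 where "j0 = snd T"
  define q0 where "q0 = evR (Pj j0)"
  have "0 < r * q0" using h_pos Pj[of j0] unfolding q0_def by metis
  hence q0pos: "q0 > 0" using r_pos by (simp add: zero_less_mult_iff)
  define Dp where "Dp = Rp - Lp"
  have evDp: "evR Dp = r * q0"
    using Lp Rp Pj[of j0] by (simp add: Dp_def evR_def hom_distribs q0_def j0_def)
  have prefev: "evR (Dp * sum_list (map Pj xs)) = q0 * sum_list (map h xs)" for xs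
  proof (induction xs)
    case Nil then show ?case by (simp add: evR_def)
  next
    case (Cons x xs)
    have "evR (Dp * sum_list (map Pj (x # xs))) = evR Dp * evR (Pj x) + evR (Dp * sum_list (map Pj xs))"
      by (simp add: evR_def hom_distribs distrib_left)
    also have "\<dots> = q0 * (h x + sum_list (map h xs))" using Cons evDp Pj[of x] by (simp add: algebra_simps)
    finally show ?case by simp
  qed
  define epre where "epre j k = (Dp * sum_list (map Pj (take k (\<sigma> j)))) mod pQ" for j k
  have epre_ev: "evR (epre j k) = q0 * P j k" for j k
    unfolding epre_def evR_def using ev_mod[OF evpQR] prefev[unfolded evR_def] by (simp add: P_def)
  define E where "E = (\<lambda>(j, k). epre j k) ` (SIGMA j:UNIV. {..<length (\<sigma> j)})"
  have finE: "finite E" unfolding E_def by (intro finite_imageI finite_SigmaI) auto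
  define V0 where "V0 = (Pj j0 * Lp) mod pQ"
  have evV0: "evR V0 = q0 * s 0"
  proof -
    have "evR V0 = evR (Pj j0 * Lp)" unfolding V0_def evR_def by (rule ev_mod[OF evpQR])
    also have "\<dots> = q0 * s 0" using Lp by (simp add: evR_def mpr.hom_mult q0_def s_def Tn_def)
    finally show ?thesis .
  qed
  obtain d where d0: "d > 0" and dint: "\<forall>V\<in>insert V0 E. \<forall>i. of_nat d * coeff V i \<in> \<int>"
    using common_denominator[of "insert V0 E"] finE by auto
  define kk where "kk n = (SOME k. k < length (\<sigma> (jn n)) \<and> s (Suc n) = \<beta> * s n + P (jn n) k)" for n
  have kk: "kk n < length (\<sigma> (jn n)) \<and> s (Suc n) = \<beta> * s n + P (jn n) (kk n)" for n
    unfolding kk_def by (rule someI_ex) (use step in blast)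
  define en where "en n = epre (jn n) (kk n)" for n
  have enE: "en n \<in> E" for n using kk[of n] unfolding en_def E_def by force
  have deg_en: "degree (en n) < N" for n by (simp add: en_def epre_def degmod)
  define V where "V = rec_nat V0 (\<lambda>n W. pCons 0 W + en n - Polynomial.smult (coeff (pCons 0 W + en n) N) pQ)"
  have V_0: "V 0 = V0" by (simp add: V_def)
  have V_S: "V (Suc n) = pCons 0 (V n) + en n - Polynomial.smult (coeff (pCons 0 (V n) + en n) N) pQ" for n
    by (simp add: V_def)

  have degV: "degree (V n) < N" for n
  proof (induction n)
    case 0 then show ?case by (simp add: V_0 V0_def degmod)
  next
    case (Suc n)
    define Y where "Y = pCons 0 (V n) + en n"
    have cY: "coeff Y i = 0" if iN: "i > N" for i
    proof -
      obtain i' where i': "i = Suc i'" using iN by (cases i) auto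
      have "coeff (V n) i' = 0" using Suc iN i' by (intro coeff_eq_0) simp
      moreover have "coeff (en n) i = 0" using deg_en[of n] iN by (intro coeff_eq_0) simp
      ultimately show ?thesis by (simp add: Y_def i')
    qed
    have "degree (V (Suc n)) \<le> N - 1"
      unfolding V_S Y_def[symmetric]
    proof (rule degree_le, intro allI impI)
      fix i assume "i > N - 1"
      hence "i = N \<or> i > N" using N0 by auto
      thus "coeff (Y - Polynomial.smult (coeff Y N) pQ) i = 0"
      proof
        assume "i = N" thus ?thesis using coeffpQN by simp
      next
        assume "i > N" thus ?thesis using cY pQhigh by simp
      qed
    qed
    thus ?case using N0 by simp
  qed

  have intV: "\<forall>i. of_nat d * coeff (V n) i \<in> \<int>" for n
  proof (induction n)
    case 0 then show ?case using dint by (simp add: V_0)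
  next
    case (Suc n)
    define Y where "Y = pCons 0 (V n) + en n"
    have iY: "of_nat d * coeff Y i \<in> \<int>" for i
    proof -
      have a: "of_nat d * coeff (pCons 0 (V n)) i \<in> \<int>" using Suc by (cases i) auto
      have b: "of_nat d * coeff (en n) i \<in> \<int>" using dint enE[of n] by auto
      have "of_nat d * coeff Y i = of_nat d * coeff (pCons 0 (V n)) i + of_nat d * coeff (en n) i"
        by (simp add: Y_def algebra_simps)
      thus ?thesis using a b by (simp add: Ints_add)
    qed
    show ?case
    proof
      fix i
      have "of_nat d * coeff (V (Suc n)) i = of_nat d * coeff Y i - (of_nat d * coeff Y N) * coeff pQ i"
        unfolding V_S Y_def[symmetric] by (simp add: algebra_simps)
      thus "of_nat d * coeff (V (Suc n)) i \<in> \<int>" using iY pQint by (simp add: Ints_diff Ints_mult)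
    qed
  qed

  have evV: "evR (V n) = q0 * s n" for n
  proof (induction n)
    case 0 then show ?case by (simp add: V_0 evV0)
  next
    case (Suc n)
    have "evR (V (Suc n)) = \<beta> * evR (V n) + evR (en n)"
      unfolding V_S evR_def ev_step evpQR by simp
    also have "\<dots> = q0 * s (Suc n)" using Suc kk[of n] epre_ev by (simp add: en_def algebra_simps)
    finally show ?case .
  qed

  have evCS: "evC (V (Suc n)) z = z * evC (V n) z + evC (en n) z" if "z \<in> Z" for n z
    unfolding V_S evC_def ev_step evpQC[OF that] by simp

  define H where "H = (\<Sum>j\<in>UNIV. h j)"
  have hH: "h j \<le> H" for j unfolding H_def by (rule member_le_sum) (use h_pos less_imp_le in auto)
  have sbound: "\<bar>s n\<bar> \<le> H" for n using cen_all[of n] hH[of "jn n"] by auto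
  have H0: "H \<ge> 0" using hH[of j0] h_pos by (meson less_imp_le order_trans)
  define Mz where "Mz z = (\<Sum>e\<in>E. cmod (evC e z))" for z
  define Bz where "Bz z = max (cmod (evC V0 z)) (Mz z / (1 - cmod z))" for z
  define bnd where "bnd z = (if z = complex_of_real \<beta> then q0 * H else Bz z)" for z
  have bnd_ok: "cmod (evC (V n) z) \<le> bnd z" if "z \<in> Z" for z n
  proof (cases "z = complex_of_real \<beta>")
    case True
    have "evC (V n) z = complex_of_real (q0 * s n)"
      using True evV[of n] by (simp add: evC_def evR_def ev_real_complex)
    hence "cmod (evC (V n) z) = \<bar>q0 * s n\<bar>" by (simp only: norm_of_real)
    also have "\<dots> = q0 * \<bar>s n\<bar>" using q0pos by (simp add: abs_mult)
    also have "\<dots> \<le> q0 * H" using sbound q0pos by (simp add: mult_left_mono)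
    finally show ?thesis using True by (simp add: bnd_def)
  next
    case False
    have z1: "cmod z < 1" using conj that False by (simp add: Z_def)
    have Mbound: "cmod (evC (en n) z) \<le> Mz z" for n
      unfolding Mz_def by (rule member_le_sum) (use enE finE in auto)
    have MB: "Mz z / (1 - cmod z) \<le> Bz z" by (simp add: Bz_def)
    hence MB': "Mz z \<le> (1 - cmod z) * Bz z" using z1 by (simp add: pos_divide_le_eq mult.commute)
    have "cmod (evC (V n) z) \<le> Bz z"
    proof (induction n)
      case 0 then show ?case by (simp add: V_0 Bz_def)
    next
      case (Suc n)
      have "cmod (evC (V (Suc n)) z) \<le> cmod z * cmod (evC (V n) z) + cmod (evC (en n) z)"
        unfolding evCS[OF that] by (metis norm_mult norm_triangle_ineq)
      also have "\<dots> \<le> cmod z * Bz z + Mz z"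
        by (intro add_mono mult_left_mono Suc Mbound) simp
      also have "\<dots> \<le> Bz z" using MB' by (simp add: algebra_simps)
      finally show ?case .
    qed
    thus ?thesis using False by (simp add: bnd_def)
  qed
  have bnd_nn: "bnd z \<ge> 0" for z
    using q0pos H0 by (auto simp: bnd_def Bz_def intro: order_trans[OF norm_ge_zero max.cobounded1])
  define Btot where "Btot = (\<Sum>z\<in>Z. bnd z)"
  have Vbound: "cmod (evC (V n) z) \<le> Btot" if "z \<in> Z" for z n
  proof -
    have "bnd z \<le> Btot" unfolding Btot_def by (rule member_le_sum) (use that finZ bnd_nn in auto)
    thus ?thesis using bnd_ok[OF that, of n] by simp
  qed
  obtain C where C: "\<forall>W B. degree W < N \<longrightarrow> (\<forall>z\<in>Z. cmod (poly W z) \<le> B) \<longrightarrow> (\<forall>k. cmod (coeff W k) \<le> C * B)"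
    using lagrange_bound[OF finZ cardZ] by blast
  have coefV: "\<bar>real_of_rat (coeff (V n) k)\<bar> \<le> C * Btot" for n k
  proof -
    have "cmod (coeff (map_poly (of_rat::rat\<Rightarrow>complex) (V n)) k) \<le> C * Btot"
    proof -
      have "degree (map_poly (of_rat::rat\<Rightarrow>complex) (V n)) < N" using degV[of n] by (simp only: deg_map_rat)
      moreover have "\<forall>z\<in>Z. cmod (poly (map_poly (of_rat::rat\<Rightarrow>complex) (V n)) z) \<le> Btot"
        using Vbound[of _ n] by (simp add: evC_def)
      ultimately show ?thesis using C by blast
    qed
    thus ?thesis by (simp add: coeff_map_rat cmod_of_rat)
  qed
  define S where "S = {W::rat poly. degree W < N \<and> (\<forall>i. of_nat d * coeff W i \<in> \<int>) \<and> (\<forall>i. \<bar>real_of_rat (coeff W i)\<bar> \<le> C * Btot)}"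
  have finS: "finite S" unfolding S_def by (rule finite_bounded_polys[OF d0])
  have VS: "V n \<in> S" for n using degV intV coefV by (simp add: S_def)
  have "range s \<subseteq> (\<lambda>W. evR W / q0) ` S"
  proof
    fix x assume "x \<in> range s"
    then obtain n where "x = s n" by auto
    hence "x = evR (V n) / q0" using evV[of n] q0pos by simp
    thus "x \<in> (\<lambda>W. evR W / q0) ` S" using VS by blast
  qed
  hence fins: "finite (range s)" using finS by (meson finite_imageI finite_subset)
  have "range Tn \<subseteq> range s \<times> UNIV" using Tn_eq by auto
  moreover have "finite (range s \<times> (UNIV :: 'a set))" using fins by simp
  ultimately have "finite (range Tn)" by (rule finite_subset)
  hence "finite (range (\<lambda>n. (F ^^ n) T))" by (simp add: Tn_def)
  from eventually_periodic[OF this] show ?thesis by (simp add: F_def)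
qed

end
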